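(* Consider an HTSP instance in which all speeds are powers of two, and let $M>0$ be at least its optimal makespan. Let $\mathcal H=\bigcup_{i\ge0}H_i$ be a Level-Prim tree with respect to $M$. Then: (a) along every path in $\mathcal H$ from $r$ to a leaf, the vertex levels are non-decreasing; (b) for every $i\ge0$, $\sum_{j\ge i}d(H_j)\le 8M\sum_{j\ge i-1}2^j\mu_j$.
   Context: HTSP: the input is a finite metric $(V,d)$, a depot $r$, and vehicles with speeds $\ge1$. A solution consists of tours from $r$ covering $V$, and its makespan is $\max_i d(\tau_i)/\lambda_i$. Here all speeds are powers of two, $\mu_j$ is the number of vehicles of speed $2^j$, and $\mu_{-1}=0$. Levels: $V_0=\{u:d(r,u)\le M\}$, and for $i\ge1$, $V_i=\{u:2^{i-1}M<d(r,u)\le2^iM\}$. Write $V_{\le i}=\bigcup_{j\le i}V_j$ and $V_{<i}=V_{\le i-1}$, with $V_{<0}=\emptyset$. $G$ is the complete graph on $V$ weighted by $d$. $G[U]$ is the induced subgraph, and $G/U$ contracts $U$ to a single vertex, keeping parallel edges. Level-Prim tree: $H_i$ is a minimum spanning tree of $G[V_{\le i}]/V_{<i}$, viewed as edges of $G$, and $\mathcal H=\bigcup_i H_i$. *)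

theory Defs
  imports Complex_Main
begin

definition finite_metric :: "'a set \<Rightarrow> ('a \<Rightarrow> 'a \<Rightarrow> real) \<Rightarrow> bool" where
  "finite_metric V d \<longleftrightarrow> finite V \<and>
     (\<forall>u\<in>V. \<forall>v\<in>V. d u v \<ge> 0 \<and> d u v = d v u \<and> (d u v = 0 \<longleftrightarrow> u = v)) \<and>
     (\<forall>u\<in>V. \<forall>v\<in>V. \<forall>w\<in>V. d u w \<le> d u v + d v w)"

definition walk_len :: "('a \<Rightarrow> 'a \<Rightarrow> real) \<Rightarrow> 'a list \<Rightarrow> real" where
  "walk_len d p = (\<Sum>j<length p - 1. d (p ! j) (p ! Suc j))"

definition tour_len :: "('a \<Rightarrow> 'a \<Rightarrow> real) \<Rightarrow> 'a \<Rightarrow> 'a list \<Rightarrow> real" where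
  "tour_len d r t = walk_len d (r # t @ [r])"

text \<open>Vehicles are given by the list ks of speed exponents: vehicle i has speed 2^(ks!i).
  A solution assigns one tour to every vehicle; together the tours cover V.\<close>
definition htsp_solution :: "'a set \<Rightarrow> 'a \<Rightarrow> nat list \<Rightarrow> 'a list list \<Rightarrow> bool" where
  "htsp_solution V r ks ts \<longleftrightarrow> length ts = length ks \<and>
     (\<forall>t\<in>set ts. set t \<subseteq> V) \<and> V \<subseteq> insert r (\<Union>t\<in>set ts. set t)"

definition makespan :: "('a \<Rightarrow> 'a \<Rightarrow> real) \<Rightarrow> 'a \<Rightarrow> nat list \<Rightarrow> 'a list list \<Rightarrow> real" where
  "makespan d r ks ts = Max ((\<lambda>i. tour_len d r (ts ! i) / 2 ^ (ks ! i)) ` {..<length ks})"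

definition htsp_opt :: "'a set \<Rightarrow> ('a \<Rightarrow> 'a \<Rightarrow> real) \<Rightarrow> 'a \<Rightarrow> nat list \<Rightarrow> real" where
  "htsp_opt V d r ks = Inf {makespan d r ks ts | ts. htsp_solution V r ks ts}"

definition mu :: "nat list \<Rightarrow> nat \<Rightarrow> nat" where
  "mu ks j = count_list ks j"

definition level_set :: "'a set \<Rightarrow> ('a \<Rightarrow> 'a \<Rightarrow> real) \<Rightarrow> 'a \<Rightarrow> real \<Rightarrow> nat \<Rightarrow> 'a set" where
  "level_set V d r M i =
     (if i = 0 then {u\<in>V. d r u \<le> M}
      else {u\<in>V. 2 ^ (i - 1) * M < d r u \<and> d r u \<le> 2 ^ i * M})"

text \<open>V_{<i}; in particular V_{<0} is empty. V_{\<le>i} = V_{<i+1}.\<close>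
definition levels_below :: "'a set \<Rightarrow> ('a \<Rightarrow> 'a \<Rightarrow> real) \<Rightarrow> 'a \<Rightarrow> real \<Rightarrow> nat \<Rightarrow> 'a set" where
  "levels_below V d r M i = (\<Union>j<i. level_set V d r M j)"

text \<open>Edges of G are represented as pairs (u,v) with u \<noteq> v; orientation is irrelevant.
  Contracting U maps u to None if u \<in> U and to Some u otherwise; every edge of G[S]
  survives (parallel edges kept), edges inside U become loops.\<close>

definition cnode :: "'a set \<Rightarrow> 'a \<Rightarrow> 'a option" where
  "cnode U u = (if u \<in> U then None else Some u)"

definition cadj :: "'a set \<Rightarrow> ('a \<times> 'a) set \<Rightarrow> 'a option \<Rightarrow> 'a option \<Rightarrow> bool" where
  "cadj U F x y \<longleftrightarrow> (\<exists>e\<in>F. (cnode U (fst e) = x \<and> cnode U (snd e) = y) \<or>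
                              (cnode U (fst e) = y \<and> cnode U (snd e) = x))"

definition graph_edges :: "'a set \<Rightarrow> ('a \<times> 'a) set" where
  "graph_edges S = {(u, v). u \<in> S \<and> v \<in> S \<and> u \<noteq> v}"

text \<open>Spanning tree of the multigraph G[S]/U: loop-free, connected, and acyclic
  (every edge is a bridge).\<close>
definition contr_spanning_tree :: "'a set \<Rightarrow> 'a set \<Rightarrow> ('a \<times> 'a) set \<Rightarrow> bool" where
  "contr_spanning_tree S U F \<longleftrightarrow>
     F \<subseteq> graph_edges S \<and>
     (\<forall>e\<in>F. cnode U (fst e) \<noteq> cnode U (snd e)) \<and>
     (\<forall>x\<in>cnode U ` S. \<forall>y\<in>cnode U ` S. (cadj U F)\<^sup>*\<^sup>* x y) \<and>
     (\<forall>e\<in>F. \<not> (cadj U (F - {e}))\<^sup>*\<^sup>* (cnode U (fst e)) (cnode U (snd e)))"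

definition edge_weight :: "('a \<Rightarrow> 'a \<Rightarrow> real) \<Rightarrow> ('a \<times> 'a) set \<Rightarrow> real" where
  "edge_weight d F = (\<Sum>e\<in>F. d (fst e) (snd e))"

definition contr_mst :: "('a \<Rightarrow> 'a \<Rightarrow> real) \<Rightarrow> 'a set \<Rightarrow> 'a set \<Rightarrow> ('a \<times> 'a) set \<Rightarrow> bool" where
  "contr_mst d S U F \<longleftrightarrow> contr_spanning_tree S U F \<and>
     (\<forall>F'. contr_spanning_tree S U F' \<longrightarrow> edge_weight d F \<le> edge_weight d F')"

text \<open>H i is a minimum spanning tree of G[V_{\<le>i}]/V_{<i}.\<close>
definition level_prim :: "'a set \<Rightarrow> ('a \<Rightarrow> 'a \<Rightarrow> real) \<Rightarrow> 'a \<Rightarrow> real \<Rightarrow> (nat \<Rightarrow> ('a \<times> 'a) set) \<Rightarrow> bool" where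
  "level_prim V d r M H \<longleftrightarrow>
     (\<forall>i. contr_mst d (levels_below V d r M (Suc i)) (levels_below V d r M i) (H i))"

definition tree_degree :: "('a \<times> 'a) set \<Rightarrow> 'a \<Rightarrow> nat" where
  "tree_degree T v = card {e\<in>T. fst e = v \<or> snd e = v}"

definition simple_path_in :: "('a \<times> 'a) set \<Rightarrow> 'a list \<Rightarrow> bool" where
  "simple_path_in T p \<longleftrightarrow> p \<noteq> [] \<and> distinct p \<and>
     (\<forall>j < length p - 1. (p ! j, p ! Suc j) \<in> T \<or> (p ! Suc j, p ! j) \<in> T)"

end

theory Submission
  imports Defs
begin

definition lev :: "('a \<Rightarrow> 'a \<Rightarrow> real) \<Rightarrow> 'a \<Rightarrow> real \<Rightarrow> 'a \<Rightarrow> nat" where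
  "lev d r M u = (LEAST i. d r u \<le> 2 ^ i * M)"

lemma lev_le_iff:
  assumes "M > 0"
  shows "lev d r M u \<le> j \<longleftrightarrow> d r u \<le> 2 ^ j * M"
proof -
  obtain n where n: "d r u / M < 2 ^ n" using real_arch_pow[of 2 "d r u / M"] by auto
  hence ex: "d r u \<le> 2 ^ n * M" using assms by (simp add: divide_less_eq)
  show ?thesis
  proof
    assume "lev d r M u \<le> j"
    moreover have "d r u \<le> 2 ^ lev d r M u * M"
      unfolding lev_def using LeastI[of "\<lambda>i. d r u \<le> 2 ^ i * M", OF ex] .
    moreover have "(2::real) ^ lev d r M u \<le> 2 ^ j" using calculation(1) by (simp add: power_increasing)
    ultimately show "d r u \<le> 2 ^ j * M" using assms
      by (meson dual_order.trans mult_right_mono less_imp_le)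
  next
    assume "d r u \<le> 2 ^ j * M"
    thus "lev d r M u \<le> j" unfolding lev_def by (rule Least_le)
  qed
qed

lemma lev_gt_iff:
  assumes "M > 0"
  shows "j < lev d r M u \<longleftrightarrow> 2 ^ j * M < d r u"
  using lev_le_iff[OF assms, of d r u j] by auto

lemma level_set_eq:
  assumes "M > 0"
  shows "level_set V d r M i = {u\<in>V. lev d r M u = i}"
proof (cases i)
  case 0
  then show ?thesis using lev_le_iff[OF assms, of d r _ 0] by (auto simp: level_set_def)
next
  case (Suc k)
  have "lev d r M u = i \<longleftrightarrow> (2 ^ k * M < d r u \<and> d r u \<le> 2 ^ i * M)" for u
  proof -
    have "lev d r M u = i \<longleftrightarrow> (k < lev d r M u \<and> lev d r M u \<le> i)" using Suc by auto
    also have "\<dots> \<longleftrightarrow> (2 ^ k * M < d r u \<and> d r u \<le> 2 ^ i * M)"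
      using lev_le_iff[OF assms, of d r u i] lev_gt_iff[OF assms, of k d r u] by blast
    finally show ?thesis .
  qed
  then show ?thesis using Suc by (auto simp: level_set_def)
qed

lemma levels_below_eq:
  assumes "M > 0"
  shows "levels_below V d r M i = {u\<in>V. lev d r M u < i}"
  unfolding levels_below_def level_set_eq[OF assms] by auto

fun pairs :: "'a list \<Rightarrow> ('a \<times> 'a) list" where
  "pairs (x # y # zs) = (x, y) # pairs (y # zs)"
| "pairs _ = []"

lemma pairs_snoc: "pairs (xs @ [y]) = pairs xs @ (if xs = [] then [] else [(last xs, y)])"
  by (induction xs rule: pairs.induct) auto

lemma set_pairs: "(a, b) \<in> set (pairs xs) \<Longrightarrow> a \<in> set xs \<and> b \<in> set xs"
  by (induction xs rule: pairs.induct) auto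

lemma walk_len_pairs: "walk_len d p = sum_list (map (\<lambda>(a, b). d a b) (pairs p))"
proof (induction p rule: pairs.induct)
  case (1 x y zs)
  have "walk_len d (x # y # zs) = d x y + walk_len d (y # zs)"
    unfolding walk_len_def by (simp add: sum.lessThan_Suc_shift del: sum.lessThan_Suc)
  then show ?case using 1 by simp
next
  case ("2_1")
  then show ?case by (simp add: walk_len_def)
next
  case ("2_2" v)
  then show ?case by (simp add: walk_len_def)
qed

definition bb :: "real \<Rightarrow> nat \<Rightarrow> real \<Rightarrow> real" where
  "bb M j t = min (max t (2 ^ j * M)) (2 ^ Suc j * M) - 2 ^ j * M"

lemma bb_eq: "bb M j t = min (max t (2 ^ j * M)) (2 * (2 ^ j * M)) - 2 ^ j * M"
  unfolding bb_def by simp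

lemma pow_M_pos: "M > 0 \<Longrightarrow> (0::real) < 2 ^ j * M"
  by simp

lemma bb_nonneg: "M > 0 \<Longrightarrow> 0 \<le> bb M j t"
proof -
  assume "M > 0"
  have "\<And>p::real. 0 < p \<Longrightarrow> 0 \<le> min (max t p) (2 * p) - p" by (auto simp: min_def max_def)
  thus ?thesis unfolding bb_eq using pow_M_pos[OF \<open>M>0\<close>] by blast
qed

lemma bb_le: "M > 0 \<Longrightarrow> bb M j t \<le> 2 ^ j * M"
proof -
  assume "M > 0"
  have "\<And>p::real. 0 < p \<Longrightarrow> min (max t p) (2 * p) - p \<le> p" by (auto simp: min_def max_def)
  thus ?thesis unfolding bb_eq using pow_M_pos[OF \<open>M>0\<close>] by blast
qed

lemma bb_low: "t \<le> 2 ^ j * M \<Longrightarrow> M > 0 \<Longrightarrow> bb M j t = 0"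
proof -
  assume "t \<le> 2 ^ j * M" "M > 0"
  have "\<And>p::real. 0 < p \<Longrightarrow> t \<le> p \<Longrightarrow> min (max t p) (2 * p) - p = 0" by (auto simp: min_def max_def)
  thus ?thesis unfolding bb_eq using pow_M_pos[OF \<open>M>0\<close>] \<open>t \<le> 2 ^ j * M\<close> by blast
qed

lemma bb_high: "2 ^ Suc j * M \<le> t \<Longrightarrow> M > 0 \<Longrightarrow> bb M j t = 2 ^ j * M"
proof -
  assume a: "2 ^ Suc j * M \<le> t" "M > 0"
  have "\<And>p::real. 0 < p \<Longrightarrow> 2 * p \<le> t \<Longrightarrow> min (max t p) (2 * p) - p = p" by (auto simp: min_def max_def)
  moreover have "2 * (2 ^ j * M) \<le> t" using a by simp
  ultimately show ?thesis unfolding bb_eq using pow_M_pos[OF \<open>M>0\<close>] by blast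
qed

lemma bb_mid: "2 ^ j * M \<le> t \<Longrightarrow> M > 0 \<Longrightarrow> bb M j t \<le> t - 2 ^ j * M"
proof -
  assume "2 ^ j * M \<le> t" "M > 0"
  have "\<And>p::real. 0 < p \<Longrightarrow> p \<le> t \<Longrightarrow> min (max t p) (2 * p) - p \<le> t - p" by (auto simp: min_def max_def)
  thus ?thesis unfolding bb_eq using pow_M_pos[OF \<open>M>0\<close>] \<open>2 ^ j * M \<le> t\<close> by blast
qed

lemma bb_mono: "s \<le> t \<Longrightarrow> M > 0 \<Longrightarrow> bb M j s \<le> bb M j t"
proof -
  assume "s \<le> t" "M > 0"
  have "\<And>p::real. 0 < p \<Longrightarrow> min (max s p) (2 * p) - p \<le> min (max t p) (2 * p) - p"
    using \<open>s \<le> t\<close> by (auto simp: min_def max_def)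
  thus ?thesis unfolding bb_eq using pow_M_pos[OF \<open>M>0\<close>] by blast
qed

lemma bb_sum: "M > 0 \<Longrightarrow> (\<Sum>j<N. bb M j t) = min (max t M) (2 ^ N * M) - M"
proof (induction N)
  case 0
  then show ?case by (simp add: min_def max_def)
next
  case (Suc N)
  have "(1::real) \<le> 2 ^ N" by simp
  hence MP: "M \<le> 2 ^ N * M" using Suc.prems by simp
  have g: "\<And>P::real. M \<le> P \<Longrightarrow> 0 < M \<Longrightarrow> min (max t M) P - M + (min (max t P) (2 * P) - P)
      = min (max t M) (2 * P) - M" by (auto simp: min_def max_def)
  have "(\<Sum>j<Suc N. bb M j t) = min (max t M) (2 ^ N * M) - M + bb M N t"
    using Suc by simp
  also have "\<dots> = min (max t M) (2 * (2 ^ N * M)) - M"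
    unfolding bb_eq by (rule g[OF MP Suc.prems])
  finally show ?case by simp
qed

lemma bb_sum_diff:
  assumes "M > 0" "s \<le> t"
  shows "(\<Sum>j<N. \<bar>bb M j s - bb M j t\<bar>) \<le> t - s"
proof -
  have "(\<Sum>j<N. \<bar>bb M j s - bb M j t\<bar>) = (\<Sum>j<N. bb M j t - bb M j s)"
    by (rule sum.cong) (use bb_mono[OF assms(2,1)] in auto)
  also have "\<dots> = (\<Sum>j<N. bb M j t) - (\<Sum>j<N. bb M j s)"
    by (simp add: sum_subtractf)
  also have "\<dots> \<le> t - s" unfolding bb_sum[OF assms(1)] using assms by (auto simp: min_def max_def)
  finally show ?thesis .
qed

lemma bb_sum_abs:
  assumes "M > 0"
  shows "(\<Sum>j<N. \<bar>bb M j s - bb M j t\<bar>) \<le> \<bar>t - s\<bar>"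
proof (cases "s \<le> t")
  case True
  then show ?thesis using bb_sum_diff[OF assms True] by simp
next
  case False
  then show ?thesis using bb_sum_diff[OF assms, of t s N] by (simp add: abs_minus_commute)
qed


lemma metric_facts:
  assumes "finite_metric V d" "u \<in> V" "v \<in> V"
  shows "0 \<le> d u v" "d u v = d v u" "d u u = 0"
  using assms unfolding finite_metric_def by auto

lemma metric_tri:
  assumes "finite_metric V d" "u \<in> V" "v \<in> V" "w \<in> V"
  shows "d u w \<le> d u v + d v w"
  using assms unfolding finite_metric_def by auto

lemma min_le_plus:
  fixes A B C D e :: real
  assumes "A \<le> C + e" "B \<le> D + e"
  shows "min A B \<le> min C D + e"
  using assms by (auto simp: min_def)

definition qf :: "('a \<Rightarrow> 'a \<Rightarrow> real) \<Rightarrow> 'a \<Rightarrow> real \<Rightarrow> nat \<Rightarrow> 'a list \<Rightarrow> 'a list" where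
  "qf d r M j p = filter (\<lambda>x. lev d r M x \<le> j) p"

definition Pj :: "('a \<Rightarrow> 'a \<Rightarrow> real) \<Rightarrow> 'a \<Rightarrow> real \<Rightarrow> nat \<Rightarrow> 'a \<times> 'a \<Rightarrow> bool" where
  "Pj d r M j e \<longleftrightarrow> fst e \<noteq> snd e \<and> max (lev d r M (fst e)) (lev d r M (snd e)) = j"

definition cst :: "('a \<Rightarrow> 'a \<Rightarrow> real) \<Rightarrow> 'a \<Rightarrow> real \<Rightarrow> nat \<Rightarrow> 'a list \<Rightarrow> real" where
  "cst d r M j p = sum_list (map (\<lambda>e. d (fst e) (snd e)) (filter (Pj d r M j) (pairs (qf d r M j p))))"

definition wj :: "('a \<Rightarrow> 'a \<Rightarrow> real) \<Rightarrow> 'a \<Rightarrow> real \<Rightarrow> nat \<Rightarrow> 'a \<times> 'a \<Rightarrow> real" where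
  "wj d r M j e = (if max (lev d r M (fst e)) (lev d r M (snd e)) = j then d (fst e) (snd e) else 0)
     + (if max (lev d r M (fst e)) (lev d r M (snd e)) = Suc j then d (fst e) (snd e) else 0)
     + \<bar>bb M j (d r (fst e)) - bb M j (d r (snd e))\<bar>"

definition Bj :: "('a \<Rightarrow> 'a \<Rightarrow> real) \<Rightarrow> 'a \<Rightarrow> real \<Rightarrow> nat \<Rightarrow> 'a list \<Rightarrow> real" where
  "Bj d r M j p = sum_list (map (wj d r M j) (pairs p))"

definition pend :: "('a \<Rightarrow> 'a \<Rightarrow> real) \<Rightarrow> 'a \<Rightarrow> real \<Rightarrow> nat \<Rightarrow> 'a list \<Rightarrow> real" where
  "pend d r M j p = (if p \<noteq> [] \<and> j < lev d r M (last p) \<and> qf d r M j p \<noteq> []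
      then min (d (last (qf d r M j p)) (last p)) (2 ^ Suc j * M - bb M j (d r (last p))) else 0)"

lemma qf_snoc: "qf d r M j (p @ [y]) = qf d r M j p @ (if lev d r M y \<le> j then [y] else [])"
  unfolding qf_def by simp

lemma cst_snoc: "cst d r M j (p @ [y]) = cst d r M j p +
   (if lev d r M y \<le> j \<and> qf d r M j p \<noteq> [] \<and> Pj d r M j (last (qf d r M j p), y)
    then d (last (qf d r M j p)) y else 0)"
  unfolding cst_def qf_snoc by (auto simp: pairs_snoc)

lemma qf_last:
  assumes "p \<noteq> []" "lev d r M (last p) \<le> j"
  shows "qf d r M j p \<noteq> [] \<and> last (qf d r M j p) = last p"
proof -
  have "p = butlast p @ [last p]" using assms(1) by simp
  hence "qf d r M j p = qf d r M j (butlast p) @ [last p]"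
    using assms(2) qf_snoc[of d r M j "butlast p" "last p"] by simp
  thus ?thesis by simp
qed

lemma set_qf: "set (qf d r M j p) \<subseteq> set p" unfolding qf_def by auto

lemma last_qf:
  assumes "qf d r M j p \<noteq> []"
  shows "last (qf d r M j p) \<in> set p \<and> lev d r M (last (qf d r M j p)) \<le> j"
proof -
  have "last (qf d r M j p) \<in> set (qf d r M j p)" using assms by simp
  thus ?thesis unfolding qf_def by auto
qed

context
  fixes V :: "'a set" and d :: "'a \<Rightarrow> 'a \<Rightarrow> real" and r :: 'a and M :: real and j :: nat
  assumes met: "finite_metric V d" and rV: "r \<in> V" and Mpos: "M > 0"
begin

lemma wj_nonneg: "x \<in> V \<Longrightarrow> y \<in> V \<Longrightarrow> 0 \<le> wj d r M j (x, y)"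
  unfolding wj_def using metric_facts[OF met] by auto

lemma pend_nonneg: "set p \<subseteq> V \<Longrightarrow> 0 \<le> pend d r M j p"
proof -
  assume pV: "set p \<subseteq> V"
  show ?thesis
  proof (cases "p \<noteq> [] \<and> j < lev d r M (last p) \<and> qf d r M j p \<noteq> []")
    case True
    hence "last (qf d r M j p) \<in> V" "last p \<in> V" using last_qf[of d r M j p] pV by auto
    hence "0 \<le> d (last (qf d r M j p)) (last p)" using metric_facts[OF met] by auto
    moreover have "bb M j (d r (last p)) \<le> 2 ^ j * M" by (rule bb_le[OF Mpos])
    moreover have "2 ^ j * M \<le> 2 ^ Suc j * M" using Mpos by simp
    ultimately have "0 \<le> min (d (last (qf d r M j p)) (last p)) (2 ^ Suc j * M - bb M j (d r (last p)))"
      by linarith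
    then show ?thesis using True unfolding pend_def by presburger
  next
    case False
    then show ?thesis unfolding pend_def by auto
  qed
qed

lemma per_level:
  assumes "set p \<subseteq> V"
  shows "cst d r M j p + pend d r M j p \<le> Bj d r M j p"
  using assms
proof (induction p rule: rev_induct)
  case Nil
  then show ?case by (simp add: cst_def pend_def Bj_def qf_def)
next
  case (snoc y p)
  have yV: "y \<in> V" and pV: "set p \<subseteq> V" using snoc.prems by auto
  have IH: "cst d r M j p + pend d r M j p \<le> Bj d r M j p" using snoc.IH pV by blast
  let ?l = "lev d r M"
  define T where "T = 2 ^ j * M"
  have T2: "2 ^ Suc j * M = 2 * T" unfolding T_def by simp
  have Tpos: "0 < T" unfolding T_def using Mpos by simp
  have lowT: "d r u \<le> T" if "?l u \<le> j" for u
    using lev_le_iff[OF Mpos, of d r u j] that unfolding T_def by blast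
  have highT: "T < d r u" if "j < ?l u" for u
    using lev_gt_iff[OF Mpos, of j d r u] that unfolding T_def by blast
  have high2T: "2 * T < d r u" if "Suc j < ?l u" for u
  proof -
    have "2 ^ Suc j * M < d r u" using lev_gt_iff[OF Mpos, of "Suc j" d r u] that by blast
    thus ?thesis unfolding T2 .
  qed
  have bblow: "bb M j (d r u) = 0" if "?l u \<le> j" for u
    using bb_low[of "d r u" j M] lowT[OF that] Mpos unfolding T_def by blast
  have bbhigh: "bb M j (d r u) = T" if "Suc j < ?l u" for u
  proof -
    have "2 ^ Suc j * M \<le> d r u" unfolding T2 using high2T[OF that] by linarith
    thus ?thesis using bb_high[of j M "d r u"] Mpos unfolding T_def by blast
  qed
  have bbmid: "bb M j (d r u) \<le> d r u - T" if "j < ?l u" for u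
  proof -
    have "2 ^ j * M \<le> d r u" using highT[OF that] unfolding T_def by linarith
    thus ?thesis using bb_mid[of j M "d r u"] Mpos unfolding T_def by blast
  qed
  have bble: "\<And>u. bb M j (d r u) \<le> T" using bb_le[OF Mpos] T_def by blast
  have bbnn: "\<And>u. 0 \<le> bb M j (d r u)" using bb_nonneg[OF Mpos] by blast
  note dnn = metric_facts(1)[OF met] and dsym = metric_facts(2)[OF met] and tri = metric_tri[OF met]
  show ?case
  proof (cases "p = []")
    case True
    then show ?thesis by (simp add: cst_def pend_def Bj_def qf_def)
  next
    case False
    define x where "x = last p"
    have xV: "x \<in> V" using False pV x_def by auto
    have B: "Bj d r M j (p @ [y]) = Bj d r M j p + wj d r M j (x, y)"
      by (simp add: Bj_def pairs_snoc False x_def)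
    have wnn: "0 \<le> wj d r M j (x, y)" by (rule wj_nonneg[OF xV yV])
    have pnn: "0 \<le> pend d r M j p" by (rule pend_nonneg[OF pV])
    have dxy: "0 \<le> d x y" using dnn xV yV by blast
    have wge: "wj d r M j (x, y) \<ge> (if max (?l x) (?l y) = j then d x y else 0)
        + (if max (?l x) (?l y) = Suc j then d x y else 0)
        + \<bar>bb M j (d r x) - bb M j (d r y)\<bar>" unfolding wj_def by simp
    consider (c1) "?l x \<le> j" "?l y \<le> j" | (c2) "?l x \<le> j" "j < ?l y"
      | (c3) "j < ?l x" "j < ?l y" | (c4) "j < ?l x" "?l y \<le> j" by linarith
    then show ?thesis
    proof cases
      case c1
      from qf_last[OF False, of d r M j] c1 have q: "qf d r M j p \<noteq> []" "last (qf d r M j p) = x"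
        unfolding x_def by auto
      have pe: "pend d r M j p = 0" using c1 unfolding pend_def x_def by auto
      have pe': "pend d r M j (p @ [y]) = 0" using c1 unfolding pend_def by auto
      have "(if Pj d r M j (x, y) then d x y else 0) \<le> wj d r M j (x, y)"
        using wge dxy wnn by (auto simp: Pj_def)
      then show ?thesis using IH pe pe' B cst_snoc[of d r M j p y] q c1 by auto
    next
      case c2
      from qf_last[OF False, of d r M j] c2 have q: "qf d r M j p \<noteq> []" "last (qf d r M j p) = x"
        unfolding x_def by auto
      have pe: "pend d r M j p = 0" using c2 unfolding pend_def x_def by auto
      have q': "qf d r M j (p @ [y]) = qf d r M j p" using c2 qf_snoc[of d r M j p y] by simp
      have pe': "pend d r M j (p @ [y]) = min (d x y) (2 * T - bb M j (d r y))"
        using c2 q q' T2 unfolding pend_def by simp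
      have cs: "cst d r M j (p @ [y]) = cst d r M j p" using c2 cst_snoc[of d r M j p y] by simp
      have bx: "bb M j (d r x) = 0" using bblow c2 by blast
      have "min (d x y) (2 * T - bb M j (d r y)) \<le> wj d r M j (x, y)"
      proof (cases "?l y = Suc j")
        case True
        then have "wj d r M j (x, y) \<ge> d x y" using wge c2 bbnn[of x] bbnn[of y] by auto
        then show ?thesis by linarith
      next
        case False
        then have "Suc j < ?l y" using c2 by linarith
        then have "bb M j (d r y) = T" by (rule bbhigh)
        then have "wj d r M j (x, y) \<ge> T" using wge c2 bx dxy Tpos \<open>Suc j < ?l y\<close> by auto
        then show ?thesis using \<open>bb M j (d r y) = T\<close> by linarith
      qed
      then show ?thesis using IH pe pe' cs B by linarith
    next
      case c3
      have q': "qf d r M j (p @ [y]) = qf d r M j p" using c3 qf_snoc[of d r M j p y] by simp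
      have cs: "cst d r M j (p @ [y]) = cst d r M j p" using c3 cst_snoc[of d r M j p y] by simp
      show ?thesis
      proof (cases "qf d r M j p = []")
        case True
        then have "pend d r M j (p @ [y]) = 0" using q' unfolding pend_def by simp
        then show ?thesis using IH cs B pnn wnn by linarith
      next
        case qne: False
        define a where "a = last (qf d r M j p)"
        have aV: "a \<in> V" and la: "?l a \<le> j" using last_qf[OF qne] pV unfolding a_def by auto
        have pe: "pend d r M j p = min (d a x) (2 * T - bb M j (d r x))"
          using c3 qne False T2 unfolding pend_def a_def x_def by simp
        have pe': "pend d r M j (p @ [y]) = min (d a y) (2 * T - bb M j (d r y))"
          using c3 qne q' T2 unfolding pend_def a_def by simp
        have ra: "d r a \<le> T" using lowT la by blast
        have tri1: "d a y \<le> d a x + d x y" using tri aV xV yV by blast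
        have tri2: "d r x \<le> d r a + d a x" using tri rV aV xV by blast
        have w3: "wj d r M j (x, y) \<ge> (if max (?l x) (?l y) = Suc j then d x y else 0)
           + \<bar>bb M j (d r x) - bb M j (d r y)\<bar>"
        proof -
          have "max (?l x) (?l y) \<noteq> j" using c3 by (simp add: max_def)
          thus ?thesis using wge by simp
        qed
        consider (s1) "Suc j < ?l y" | (s2) "?l y = Suc j" "Suc j < ?l x"
          | (s3) "?l y = Suc j" "?l x = Suc j" using c3 by linarith
        then have "min (d a y) (2 * T - bb M j (d r y)) \<le> pend d r M j p + wj d r M j (x, y)"
        proof cases
          case s1
          have hby: "bb M j (d r y) = T" using bbhigh s1 by blast
          have "bb M j (d r x) \<le> d r x - T" using bbmid c3 by blast
          hence "bb M j (d r x) \<le> min (d a x) (2 * T - bb M j (d r x))"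
            using tri2 ra bble[of x] by simp
          moreover have "wj d r M j (x, y) \<ge> T - bb M j (d r x)"
          proof -
            have "max (?l x) (?l y) \<noteq> Suc j" using s1 by (auto simp: max_def)
            hence "wj d r M j (x, y) \<ge> \<bar>bb M j (d r x) - bb M j (d r y)\<bar>" using w3 by simp
            thus ?thesis using hby bble[of x] by linarith
          qed
          ultimately show ?thesis using pe hby by linarith
        next
          case s2
          have bx: "bb M j (d r x) = T" using bbhigh s2 by blast
          have "2 * T < d r x" using high2T s2 by blast
          hence "min (d a x) (2 * T - bb M j (d r x)) = T" using bx tri2 ra by simp
          moreover have "wj d r M j (x, y) \<ge> T - bb M j (d r y)"
          proof -
            have "max (?l x) (?l y) \<noteq> Suc j" using s2 by (auto simp: max_def)
            hence "wj d r M j (x, y) \<ge> \<bar>bb M j (d r x) - bb M j (d r y)\<bar>" using w3 by simp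
            thus ?thesis using bx bble[of y] by linarith
          qed
          ultimately show ?thesis using pe by linarith
        next
          case s3
          have "wj d r M j (x, y) \<ge> d x y + \<bar>bb M j (d r x) - bb M j (d r y)\<bar>"
            using w3 s3 by simp
          moreover have "min (d a y) (2 * T - bb M j (d r y)) \<le> min (d a x) (2 * T - bb M j (d r x))
              + (d x y + \<bar>bb M j (d r x) - bb M j (d r y)\<bar>)"
            by (rule min_le_plus) (use tri1 dxy in linarith)+
          ultimately show ?thesis using pe by linarith
        qed
        then show ?thesis using IH cs B pe' by linarith
      qed
    next
      case c4
      have pe': "pend d r M j (p @ [y]) = 0" using c4 unfolding pend_def by auto
      show ?thesis
      proof (cases "qf d r M j p = []")
        case True
        then have "cst d r M j (p @ [y]) = cst d r M j p" using cst_snoc[of d r M j p y] by simp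
        then show ?thesis using IH pe' B pnn wnn by linarith
      next
        case qne: False
        define a where "a = last (qf d r M j p)"
        have aV: "a \<in> V" and la: "?l a \<le> j" using last_qf[OF qne] pV unfolding a_def by auto
        have cs: "cst d r M j (p @ [y]) \<le> cst d r M j p + d a y"
          using cst_snoc[of d r M j p y] dnn[OF aV yV] unfolding a_def by auto
        have pe: "pend d r M j p = min (d a x) (2 * T - bb M j (d r x))"
          using c4 qne False T2 unfolding pend_def a_def x_def by simp
        have ra: "d r a \<le> T" using lowT la by blast
        have ry: "d r y \<le> T" using lowT c4 by blast
        have hby: "bb M j (d r y) = 0" using bblow c4 by blast
        have tri1: "d a y \<le> d a x + d x y" using tri aV xV yV by blast
        have tri2: "d r x \<le> d r a + d a x" using tri rV aV xV by blast
        have tri3: "d a y \<le> d a r + d r y" using tri aV rV yV by blast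
        have ar: "d a r = d r a" using dsym aV rV by blast
        have w4: "wj d r M j (x, y) \<ge> (if ?l x = Suc j then d x y else 0) + bb M j (d r x)"
          using wge c4 hby bbnn[of x] by (auto simp: max_def)
        have "d a y \<le> pend d r M j p + wj d r M j (x, y)"
        proof (cases "?l x = Suc j")
          case True
          have "min (d a x) (2 * T - bb M j (d r x)) + (d x y + bb M j (d r x)) \<ge> d a y"
            using tri1 tri3 ar ra ry bbnn[of x] dxy by (auto simp: min_def)
          then show ?thesis using w4 True pe by auto
        next
          case False
          then have "Suc j < ?l x" using c4 by linarith
          then have bx: "bb M j (d r x) = T" using bbhigh by blast
          have "2 * T < d r x" using high2T \<open>Suc j < ?l x\<close> by blast
          hence "min (d a x) (2 * T - bb M j (d r x)) = T" using bx tri2 ra by simp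
          moreover have "wj d r M j (x, y) \<ge> T" using w4 bx \<open>Suc j < ?l x\<close> by simp
          ultimately show ?thesis using pe tri3 ar ra ry by linarith
        qed
        then show ?thesis using IH cs B pe' by linarith
      qed
    qed
  qed
qed

lemma wj_sum:
  assumes "x \<in> V" "y \<in> V"
  shows "(\<Sum>j<N. wj d r M j (x, y)) \<le> 3 * d x y"
proof -
  let ?m = "max (lev d r M x) (lev d r M y)"
  have dxy: "0 \<le> d x y" using metric_facts(1)[OF met assms] .
  have s1: "(\<Sum>j<N. (if ?m = j then d x y else 0)) \<le> d x y" using dxy by simp
  have "(\<Sum>j<N. (if ?m = Suc j then d x y else 0)) \<le> (\<Sum>j<N. (if ?m - 1 = j then d x y else 0))"
    by (rule sum_mono) (use dxy in auto)
  also have "\<dots> \<le> d x y" using dxy by simp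
  finally have s2: "(\<Sum>j<N. (if ?m = Suc j then d x y else 0)) \<le> d x y" .
  have "(\<Sum>j<N. \<bar>bb M j (d r x) - bb M j (d r y)\<bar>) \<le> \<bar>d r y - d r x\<bar>"
    by (rule bb_sum_abs[OF Mpos])
  also have "\<dots> \<le> d x y"
  proof -
    have "d r y \<le> d r x + d x y" using metric_tri[OF met rV assms] .
    moreover have "d r x \<le> d r y + d y x" using metric_tri[OF met rV assms(2,1)] .
    moreover have "d y x = d x y" using metric_facts(2)[OF met assms(2,1)] .
    ultimately show ?thesis by linarith
  qed
  finally have s3: "(\<Sum>j<N. \<bar>bb M j (d r x) - bb M j (d r y)\<bar>) \<le> d x y" .
  have "(\<Sum>j<N. wj d r M j (x, y)) = (\<Sum>j<N. (if ?m = j then d x y else 0))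
      + (\<Sum>j<N. (if ?m = Suc j then d x y else 0)) + (\<Sum>j<N. \<bar>bb M j (d r x) - bb M j (d r y)\<bar>)"
    unfolding wj_def fst_conv snd_conv by (simp only: sum.distrib)
  thus ?thesis using s1 s2 s3 by linarith
qed

lemma sum_sum_list_swap:
  "(\<Sum>j\<in>A. sum_list (map (f j) xs)) = sum_list (map (\<lambda>x. \<Sum>j\<in>A. f j x) xs)"
  by (induction xs) (auto simp: sum.distrib)

lemma Bj_sum:
  assumes "set p \<subseteq> V"
  shows "(\<Sum>j<N. Bj d r M j p) \<le> 3 * walk_len d p"
proof -
  have "(\<Sum>j<N. Bj d r M j p) = sum_list (map (\<lambda>e. \<Sum>j<N. wj d r M j e) (pairs p))"
    unfolding Bj_def by (rule sum_sum_list_swap)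
  also have "\<dots> \<le> sum_list (map (\<lambda>e. 3 * d (fst e) (snd e)) (pairs p))"
  proof (rule sum_list_mono)
    fix e assume "e \<in> set (pairs p)"
    then have "fst e \<in> V" "snd e \<in> V" using set_pairs[of "fst e" "snd e" p] assms by auto
    then show "(\<Sum>j<N. wj d r M j e) \<le> 3 * d (fst e) (snd e)" using wj_sum[of "fst e" "snd e" N] by simp
  qed
  also have "\<dots> = 3 * walk_len d p"
    unfolding walk_len_pairs by (induction p rule: pairs.induct) (auto simp: case_prod_beta)
  finally show ?thesis .
qed

lemma cst_nonneg: "set p \<subseteq> V \<Longrightarrow> 0 \<le> cst d r M j p"
  unfolding cst_def
proof (rule sum_list_nonneg)
  fix z assume sp: "set p \<subseteq> V" and "z \<in> set (map (\<lambda>e. d (fst e) (snd e)) (filter (Pj d r M j) (pairs (qf d r M j p))))"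
  then obtain e where e: "e \<in> set (pairs (qf d r M j p))" "z = d (fst e) (snd e)" by auto
  then have "fst e \<in> set p" "snd e \<in> set p" using set_pairs[of "fst e" "snd e"] set_qf[of d r M j p] by auto
  then show "0 \<le> z" using e sp metric_facts(1)[OF met] by auto
qed

lemma cst_le_Bj: "set p \<subseteq> V \<Longrightarrow> cst d r M j p \<le> Bj d r M j p"
  using per_level[of p] pend_nonneg[of p] by linarith

end

lemma cst_sum:
  assumes met: "finite_metric V d" and rV: "r \<in> V" and Mpos: "M > 0"
    and sp: "set p \<subseteq> V" and fin: "finite J"
  shows "(\<Sum>j\<in>J. cst d r M j p) \<le> 3 * walk_len d p"
proof -
  obtain N where JN: "J \<subseteq> {..<N}" using fin unfolding finite_nat_set_iff_bounded by auto
  have "(\<Sum>j\<in>J. cst d r M j p) \<le> (\<Sum>j<N. cst d r M j p)"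
    by (rule sum_mono2) (use JN cst_nonneg[OF met rV Mpos sp] in auto)
  also have "\<dots> \<le> (\<Sum>j<N. Bj d r M j p)"
    by (rule sum_mono) (rule cst_le_Bj[OF met rV Mpos sp])
  also have "\<dots> \<le> 3 * walk_len d p" by (rule Bj_sum[OF met rV Mpos sp])
  finally show ?thesis .
qed


lemma rtranclp_sym:
  assumes "\<And>a b. R a b \<Longrightarrow> R b a" and "R\<^sup>*\<^sup>* x y"
  shows "R\<^sup>*\<^sup>* y x"
  using assms(2)
proof (induction rule: rtranclp.induct)
  case (rtrancl_refl a)
  then show ?case by simp
next
  case (rtrancl_into_rtrancl a b c)
  then show ?case using assms(1) by (meson converse_rtranclp_into_rtranclp)
qed

lemma rtranclp_mono_gen:
  assumes "\<And>a b. R a b \<Longrightarrow> S\<^sup>*\<^sup>* a b" and "R\<^sup>*\<^sup>* x y"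
  shows "S\<^sup>*\<^sup>* x y"
  using assms(2)
proof (induction rule: rtranclp.induct)
  case (rtrancl_refl a)
  then show ?case by simp
next
  case (rtrancl_into_rtrancl a b c)
  then show ?case using assms(1) by (meson rtranclp_trans)
qed

lemma cadj_sym: "cadj U F a b \<Longrightarrow> cadj U F b a"
  unfolding cadj_def by blast

lemma remove_nonbridge:
  assumes p: "(cadj U (F - {e}))\<^sup>*\<^sup>* (cnode U (fst e)) (cnode U (snd e))"
    and "(cadj U F)\<^sup>*\<^sup>* x y"
  shows "(cadj U (F - {e}))\<^sup>*\<^sup>* x y"
proof (rule rtranclp_mono_gen[OF _ assms(2)])
  fix a b assume "cadj U F a b"
  then obtain e' where e': "e' \<in> F" "(cnode U (fst e') = a \<and> cnode U (snd e') = b) \<or>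
      (cnode U (fst e') = b \<and> cnode U (snd e') = a)" unfolding cadj_def by blast
  show "(cadj U (F - {e}))\<^sup>*\<^sup>* a b"
  proof (cases "e' = e")
    case False
    then have "cadj U (F - {e}) a b" using e' unfolding cadj_def by blast
    then show ?thesis by simp
  next
    case True
    have q: "(cadj U (F - {e}))\<^sup>*\<^sup>* (cnode U (snd e)) (cnode U (fst e))"
      by (rule rtranclp_sym[OF _ p]) (rule cadj_sym)
    show ?thesis using e' True p q by auto
  qed
qed

lemma extract_tree:
  assumes "finite E" "E \<subseteq> graph_edges S" "\<forall>e\<in>E. cnode U (fst e) \<noteq> cnode U (snd e)"
    "\<forall>x\<in>cnode U ` S. \<forall>y\<in>cnode U ` S. (cadj U E)\<^sup>*\<^sup>* x y"
  shows "\<exists>F\<subseteq>E. contr_spanning_tree S U F"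
  using assms
proof (induction "card E" arbitrary: E rule: less_induct)
  case less
  show ?case
  proof (cases "\<forall>e\<in>E. \<not> (cadj U (E - {e}))\<^sup>*\<^sup>* (cnode U (fst e)) (cnode U (snd e))")
    case True
    then have "contr_spanning_tree S U E" using less.prems unfolding contr_spanning_tree_def by blast
    then show ?thesis by blast
  next
    case False
    then obtain e where e: "e \<in> E" "(cadj U (E - {e}))\<^sup>*\<^sup>* (cnode U (fst e)) (cnode U (snd e))" by blast
    have c: "card (E - {e}) < card E" using e(1) less.prems(1) by (meson card_Diff1_less)
    have "\<exists>F\<subseteq>E - {e}. contr_spanning_tree S U F"
    proof (rule less.hyps[OF c])
      show "finite (E - {e})" using less.prems(1) by simp
      show "E - {e} \<subseteq> graph_edges S" using less.prems(2) by blast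
      show "\<forall>e'\<in>E - {e}. cnode U (fst e') \<noteq> cnode U (snd e')" using less.prems(3) by blast
      show "\<forall>x\<in>cnode U ` S. \<forall>y\<in>cnode U ` S. (cadj U (E - {e}))\<^sup>*\<^sup>* x y"
        using less.prems(4) remove_nonbridge[OF e(2)] by blast
    qed
    then show ?thesis by blast
  qed
qed

lemma mst_bound:
  assumes "contr_mst d S U H" "finite E" "E \<subseteq> graph_edges S"
    "\<forall>e\<in>E. cnode U (fst e) \<noteq> cnode U (snd e)"
    "\<forall>x\<in>cnode U ` S. \<forall>y\<in>cnode U ` S. (cadj U E)\<^sup>*\<^sup>* x y"
    "\<forall>e\<in>E. 0 \<le> d (fst e) (snd e)"
  shows "edge_weight d H \<le> edge_weight d E"
proof -
  obtain F where F: "F \<subseteq> E" "contr_spanning_tree S U F" using extract_tree[OF assms(2-5)] by blast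
  have "edge_weight d H \<le> edge_weight d F" using assms(1) F(2) unfolding contr_mst_def by blast
  also have "\<dots> \<le> edge_weight d E" unfolding edge_weight_def
    by (rule sum_mono2) (use assms(2,6) F(1) in auto)
  finally show ?thesis .
qed

lemma sum_set_le_sum_list:
  fixes f :: "'b \<Rightarrow> real"
  assumes "\<forall>x\<in>set xs. 0 \<le> f x"
  shows "sum f (set xs) \<le> sum_list (map f xs)"
  using assms
proof (induction xs)
  case Nil
  then show ?case by simp
next
  case (Cons x xs)
  have "sum f (set (x # xs)) \<le> f x + sum f (set xs)"
    using Cons.prems by (simp add: sum.insert_if)
  then show ?case using Cons by simp
qed

lemma path_chain:
  assumes "\<forall>e\<in>set (pairs xs). R\<^sup>*\<^sup>* (f (fst e)) (f (snd e))" "u \<in> set xs"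
  shows "R\<^sup>*\<^sup>* (f (hd xs)) (f u)"
  using assms
proof (induction xs rule: pairs.induct)
  case (1 x y zs)
  show ?case
  proof (cases "u = x")
    case True
    then show ?thesis by simp
  next
    case False
    then have "u \<in> set (y # zs)" using 1(3) by simp
    then have "R\<^sup>*\<^sup>* (f y) (f u)" using 1 by simp
    moreover have "R\<^sup>*\<^sup>* (f x) (f y)" using 1(2) by simp
    ultimately show ?thesis by (simp add: rtranclp_trans)
  qed
qed auto

lemma lev_r: "finite_metric V d \<Longrightarrow> r \<in> V \<Longrightarrow> M > 0 \<Longrightarrow> lev d r M r = 0"
  using lev_le_iff[of M d r r 0] metric_facts(3)[of V d r] by simp

lemma level_bound:
  assumes met: "finite_metric V d" and rV: "r \<in> V" and Mpos: "M > 0"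
    and LP: "level_prim V d r M H"
    and tours: "\<forall>\<tau>\<in>set Ts. set \<tau> \<subseteq> V \<and> \<tau> \<noteq> [] \<and> hd \<tau> = r"
    and cover: "V \<subseteq> insert r (\<Union>\<tau>\<in>set Ts. set \<tau>)"
  shows "edge_weight d (H j) \<le> sum_list (map (cst d r M j) Ts)"
proof -
  let ?l = "lev d r M"
  define S where "S = levels_below V d r M (Suc j)"
  define U where "U = levels_below V d r M j"
  have S: "S = {u\<in>V. ?l u \<le> j}" unfolding S_def levels_below_eq[OF Mpos] by auto
  have U: "U = {u\<in>V. ?l u < j}" unfolding U_def levels_below_eq[OF Mpos] by auto
  define Lst where "Lst = concat (map (\<lambda>\<tau>. filter (Pj d r M j) (pairs (qf d r M j \<tau>))) Ts)"
  define E where "E = set Lst"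
  have mst: "contr_mst d S U (H j)" using LP unfolding level_prim_def S_def U_def by blast
  have Emem: "e \<in> E \<longleftrightarrow> (\<exists>\<tau>\<in>set Ts. e \<in> set (pairs (qf d r M j \<tau>)) \<and> Pj d r M j e)" for e
    unfolding E_def Lst_def by auto
  have pr: "fst e \<in> V \<and> snd e \<in> V \<and> ?l (fst e) \<le> j \<and> ?l (snd e) \<le> j"
    if "\<tau> \<in> set Ts" "e \<in> set (pairs (qf d r M j \<tau>))" for \<tau> e
  proof -
    have "fst e \<in> set (qf d r M j \<tau>)" "snd e \<in> set (qf d r M j \<tau>)"
      using set_pairs[of "fst e" "snd e"] that(2) by auto
    then show ?thesis using tours that(1) unfolding qf_def by auto
  qed
  have fin: "finite E" unfolding E_def by simp
  have sub: "E \<subseteq> graph_edges S"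
  proof
    fix e assume "e \<in> E"
    then obtain \<tau> where "\<tau> \<in> set Ts" "e \<in> set (pairs (qf d r M j \<tau>))" "Pj d r M j e" using Emem by blast
    then show "e \<in> graph_edges S" using pr unfolding graph_edges_def S Pj_def by (cases e) auto
  qed
  have noloop: "\<forall>e\<in>E. cnode U (fst e) \<noteq> cnode U (snd e)"
  proof
    fix e assume "e \<in> E"
    then obtain \<tau> where "\<tau> \<in> set Ts" "e \<in> set (pairs (qf d r M j \<tau>))" "Pj d r M j e" using Emem by blast
    then have "fst e \<noteq> snd e" "max (?l (fst e)) (?l (snd e)) = j" unfolding Pj_def by auto
    then show "cnode U (fst e) \<noteq> cnode U (snd e)" unfolding cnode_def U by (auto simp: max_def split: if_splits)
  qed
  have nonneg: "\<forall>e\<in>E. 0 \<le> d (fst e) (snd e)"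
  proof
    fix e assume "e \<in> E"
    then obtain \<tau> where "\<tau> \<in> set Ts" "e \<in> set (pairs (qf d r M j \<tau>))" using Emem by blast
    then show "0 \<le> d (fst e) (snd e)" using pr metric_facts(1)[OF met] by blast
  qed
  have toR: "(cadj U E)\<^sup>*\<^sup>* (cnode U r) (cnode U u)" if uS: "u \<in> S" for u
  proof (cases "u = r")
    case True
    then show ?thesis by simp
  next
    case False
    then obtain \<tau> where t: "\<tau> \<in> set Ts" "u \<in> set \<tau>" using uS cover S by blast
    have uq: "u \<in> set (qf d r M j \<tau>)" using t uS S unfolding qf_def by auto
    have "\<tau> = r # tl \<tau>" using tours t(1) by (metis list.collapse)
    then have hq: "hd (qf d r M j \<tau>) = r" unfolding qf_def using lev_r[OF met rV Mpos]
      by (metis filter.simps(2) list.sel(1) zero_le)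
    have "\<forall>e\<in>set (pairs (qf d r M j \<tau>)). (cadj U E)\<^sup>*\<^sup>* (cnode U (fst e)) (cnode U (snd e))"
    proof
      fix e assume e: "e \<in> set (pairs (qf d r M j \<tau>))"
      show "(cadj U E)\<^sup>*\<^sup>* (cnode U (fst e)) (cnode U (snd e))"
      proof (cases "Pj d r M j e")
        case True
        then have "e \<in> E" using Emem t(1) e by blast
        then have "cadj U E (cnode U (fst e)) (cnode U (snd e))" unfolding cadj_def by blast
        then show ?thesis by simp
      next
        case False
        have "fst e \<in> V \<and> snd e \<in> V \<and> ?l (fst e) \<le> j \<and> ?l (snd e) \<le> j" using pr[OF t(1) e] .
        then have "fst e = snd e \<or> (fst e \<in> U \<and> snd e \<in> U)" using False unfolding Pj_def U
          by (auto simp: max_def split: if_splits)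
        then have "cnode U (fst e) = cnode U (snd e)" unfolding cnode_def by auto
        then show ?thesis by simp
      qed
    qed
    from path_chain[OF this uq] show ?thesis using hq by simp
  qed
  have conn: "\<forall>x\<in>cnode U ` S. \<forall>y\<in>cnode U ` S. (cadj U E)\<^sup>*\<^sup>* x y"
  proof (intro ballI)
    fix x y assume "x \<in> cnode U ` S" "y \<in> cnode U ` S"
    then obtain u v where uv: "u \<in> S" "v \<in> S" "x = cnode U u" "y = cnode U v" by blast
    have "(cadj U E)\<^sup>*\<^sup>* x (cnode U r)"
      using rtranclp_sym[OF _ toR[OF uv(1)]] cadj_sym uv(3) by metis
    moreover have "(cadj U E)\<^sup>*\<^sup>* (cnode U r) y" using toR[OF uv(2)] uv(4) by simp
    ultimately show "(cadj U E)\<^sup>*\<^sup>* x y" by (rule rtranclp_trans)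
  qed
  have "edge_weight d (H j) \<le> edge_weight d E"
    by (rule mst_bound[OF mst fin sub noloop conn nonneg])
  also have "\<dots> \<le> sum_list (map (\<lambda>e. d (fst e) (snd e)) Lst)"
    unfolding edge_weight_def E_def by (rule sum_set_le_sum_list) (use nonneg E_def in auto)
  also have "\<dots> = sum_list (map (cst d r M j) Ts)"
    unfolding Lst_def cst_def by (induction Ts) simp_all
  finally show ?thesis .
qed

lemma edge_lev:
  assumes Mpos: "M > 0" and LP: "level_prim V d r M H" and e: "e \<in> H i"
  shows "fst e \<in> V \<and> snd e \<in> V \<and> max (lev d r M (fst e)) (lev d r M (snd e)) = i"
proof -
  have t: "contr_spanning_tree (levels_below V d r M (Suc i)) (levels_below V d r M i) (H i)"
    using LP unfolding level_prim_def contr_mst_def by blast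
  have "e \<in> graph_edges (levels_below V d r M (Suc i))" using t e unfolding contr_spanning_tree_def by blast
  then have a: "fst e \<in> V" "snd e \<in> V" "lev d r M (fst e) \<le> i" "lev d r M (snd e) \<le> i"
    unfolding graph_edges_def levels_below_eq[OF Mpos] by auto
  have "cnode (levels_below V d r M i) (fst e) \<noteq> cnode (levels_below V d r M i) (snd e)"
    using t e unfolding contr_spanning_tree_def by blast
  moreover have "lev d r M (fst e) < i \<and> lev d r M (snd e) < i \<Longrightarrow>
      cnode (levels_below V d r M i) (fst e) = cnode (levels_below V d r M i) (snd e)"
    using a unfolding cnode_def levels_below_eq[OF Mpos] by simp
  ultimately have "lev d r M (fst e) = i \<or> lev d r M (snd e) = i" using a by linarith
  then show ?thesis using a by (auto simp: max_def)
qed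

lemma part_a:
  assumes met: "finite_metric V d" and rV: "r \<in> V" and Mpos: "M > 0"
    and LP: "level_prim V d r M H"
    and sp: "simple_path_in (\<Union>i. H i) p" and hp: "hd p = r"
  shows "\<forall>m < length p - 1. lev d r M (p ! m) \<le> lev d r M (p ! Suc m)"
proof (rule ccontr)
  let ?l = "lev d r M"
  assume "\<not> ?thesis"
  then have ex: "\<exists>m. m < length p - 1 \<and> ?l (p ! Suc m) < ?l (p ! m)" by auto
  define m where "m = (LEAST m. m < length p - 1 \<and> ?l (p ! Suc m) < ?l (p ! m))"
  have m: "m < length p - 1" "?l (p ! Suc m) < ?l (p ! m)"
    using LeastI_ex[OF ex] unfolding m_def by auto
  have mmin: "?l (p ! t) \<le> ?l (p ! Suc t)" if "t < m" for t
    using not_less_Least[of t "\<lambda>m. m < length p - 1 \<and> ?l (p ! Suc m) < ?l (p ! m)"] that m(1)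
    unfolding m_def[symmetric] by auto
  have pne: "p \<noteq> []" and dist: "distinct p"
    and edges: "\<forall>t < length p - 1. (p ! t, p ! Suc t) \<in> (\<Union>i. H i) \<or> (p ! Suc t, p ! t) \<in> (\<Union>i. H i)"
    using sp unfolding simple_path_in_def by auto
  have inV: "p ! t \<in> V \<and> p ! Suc t \<in> V" if "t < length p - 1" for t
    using edges that edge_lev[OF Mpos LP] by fastforce
  have mono: "?l (p ! t) \<le> ?l (p ! (t + k))" if "t + k \<le> m" for t k
    using that
  proof (induction k)
    case 0
    then show ?case by simp
  next
    case (Suc k)
    then have "?l (p ! t) \<le> ?l (p ! (t + k))" by simp
    also have "\<dots> \<le> ?l (p ! Suc (t + k))" using mmin Suc.prems by simp
    finally show ?case by simp
  qed
  have mono2: "?l (p ! t) \<le> ?l (p ! t')" if "t \<le> t'" "t' \<le> m" for t t'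
    using mono[of t "t' - t"] that by simp
  define A where "A = ?l (p ! m)"
  have p0: "p ! 0 = r" using hp pne by (simp add: hd_conv_nth)
  have l0: "?l (p ! 0) = 0" using p0 lev_r[OF met rV Mpos] by simp
  have Apos: "0 < A" using m(2) A_def by simp
  define s where "s = (LEAST t. ?l (p ! t) = A)"
  have sA: "?l (p ! s) = A" unfolding s_def by (rule LeastI[of _ m]) (simp add: A_def)
  have sm: "s \<le> m" unfolding s_def by (rule Least_le) (simp add: A_def)
  have s0: "s \<noteq> 0"
  proof
    assume "s = 0" then show False using sA l0 Apos by simp
  qed
  have midA: "?l (p ! t) = A" if "s \<le> t" "t \<le> m" for t
    using mono2[OF that] mono2[OF that(2) order_refl] sA A_def by simp
  have befA: "?l (p ! (s - 1)) < A"
  proof -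
    have "?l (p ! (s - 1)) \<le> A" using mono2[of "s - 1" m] sm A_def by simp
    moreover have "?l (p ! (s - 1)) \<noteq> A" using not_less_Least[of "s - 1" "\<lambda>t. ?l (p ! t) = A"] s0
      unfolding s_def[symmetric] by simp
    ultimately show ?thesis by simp
  qed
  define U where "U = levels_below V d r M A"
  have Ueq: "U = {u\<in>V. ?l u < A}" unfolding U_def levels_below_eq[OF Mpos] ..
  have inHA: "\<exists>e\<in>H A. e = (p ! t, p ! Suc t) \<or> e = (p ! Suc t, p ! t)"
    if tl: "t < length p - 1" and mx: "max (?l (p ! t)) (?l (p ! Suc t)) = A" for t
  proof -
    obtain i e where "e \<in> H i" "e = (p ! t, p ! Suc t) \<or> e = (p ! Suc t, p ! t)"
      using edges tl by blast
    moreover then have "i = A" using edge_lev[OF Mpos LP, of e i] mx by (auto simp: max_def)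
    ultimately show ?thesis by blast
  qed
  have mA: "max (?l (p ! m)) (?l (p ! Suc m)) = A" using m(2) A_def by simp
  obtain es where es: "es \<in> H A" "es = (p ! m, p ! Suc m) \<or> es = (p ! Suc m, p ! m)"
    using inHA[OF m(1) mA] by blast
  have tree: "contr_spanning_tree (levels_below V d r M (Suc A)) U (H A)"
    using LP unfolding level_prim_def contr_mst_def U_def by blast
  have bridge: "\<not> (cadj U (H A - {es}))\<^sup>*\<^sup>* (cnode U (fst es)) (cnode U (snd es))"
    using tree es(1) unfolding contr_spanning_tree_def by blast
  let ?R = "cadj U (H A - {es})"
  have lenp: "Suc m < length p" using m(1) by simp
  have step: "?R (cnode U (p ! t)) (cnode U (p ! Suc t))" if "s - 1 \<le> t" "t < m" for t
  proof -
    have tl: "t < length p - 1" using that m(1) by simp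
    have "?l (p ! Suc t) = A" using midA[of "Suc t"] that s0 by simp
    moreover have "?l (p ! t) \<le> A" using mono2[of t m] that A_def by simp
    ultimately have "max (?l (p ! t)) (?l (p ! Suc t)) = A" by simp
    then obtain e where e: "e \<in> H A" "e = (p ! t, p ! Suc t) \<or> e = (p ! Suc t, p ! t)"
      using inHA[OF tl] by blast
    have "e \<noteq> es"
    proof
      assume "e = es"
      then have "p ! t = p ! m \<or> p ! t = p ! Suc m" using e(2) es(2) by auto
      moreover have "p ! t \<noteq> p ! m" using nth_eq_iff_index_eq[OF dist, of t m] that lenp by simp
      moreover have "p ! t \<noteq> p ! Suc m" using nth_eq_iff_index_eq[OF dist, of t "Suc m"] that lenp by simp
      ultimately show False by blast
    qed
    then have eH: "e \<in> H A - {es}" using e(1) by blast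
    have "(cnode U (fst e) = cnode U (p ! t) \<and> cnode U (snd e) = cnode U (p ! Suc t)) \<or>
      (cnode U (fst e) = cnode U (p ! Suc t) \<and> cnode U (snd e) = cnode U (p ! t))" using e(2) by auto
    then show ?thesis unfolding cadj_def using eH by blast
  qed
  have chain: "?R\<^sup>*\<^sup>* (cnode U (p ! (s - 1))) (cnode U (p ! (s - 1 + k)))" if "s - 1 + k \<le> m" for k
    using that
  proof (induction k)
    case 0
    then show ?case by simp
  next
    case (Suc k)
    then have "?R\<^sup>*\<^sup>* (cnode U (p ! (s - 1))) (cnode U (p ! (s - 1 + k)))" by simp
    moreover have "?R (cnode U (p ! (s - 1 + k))) (cnode U (p ! Suc (s - 1 + k)))"
      using step[of "s - 1 + k"] Suc.prems by simp
    ultimately show ?case by simp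
  qed
  have smV: "p ! (s - 1) \<in> V" using inV[of "s - 1"] sm m(1) by simp
  have m1V: "p ! Suc m \<in> V" using inV[OF m(1)] by simp
  have c1: "cnode U (p ! (s - 1)) = None" using smV befA unfolding cnode_def Ueq by simp
  have c2: "cnode U (p ! Suc m) = None" using m1V m(2) A_def unfolding cnode_def Ueq by simp
  have "?R\<^sup>*\<^sup>* None (cnode U (p ! m))" using chain[of "m - (s - 1)"] sm c1 by simp
  moreover have "?R\<^sup>*\<^sup>* (cnode U (p ! m)) None"
    by (rule rtranclp_sym[OF _ calculation]) (rule cadj_sym)
  ultimately have "?R\<^sup>*\<^sup>* (cnode U (fst es)) (cnode U (snd es))" using es(2) c2 by auto
  then show False using bridge by blast
qed

lemma sum_list_count_real:
  "sum_list (map (g :: 'b \<Rightarrow> real) xs) = (\<Sum>x\<in>set xs. real (count_list xs x) * g x)"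
proof (induction xs)
  case Nil
  then show ?case by simp
next
  case (Cons x xs)
  have "(\<Sum>y\<in>set (x # xs). real (count_list (x # xs) y) * g y)
      = (\<Sum>y\<in>set (x # xs). real (count_list xs y) * g y + (if x = y then g y else 0))"
    by (rule sum.cong) (auto simp: algebra_simps)
  also have "\<dots> = (\<Sum>y\<in>set (x # xs). real (count_list xs y) * g y) + g x"
    by (simp add: sum.distrib)
  also have "(\<Sum>y\<in>set (x # xs). real (count_list xs y) * g y) = (\<Sum>y\<in>set xs. real (count_list xs y) * g y)"
  proof (cases "x \<in> set xs")
    case True
    then show ?thesis by (simp add: insert_absorb)
  next
    case False
    then have "count_list xs x = 0" by (simp add: count_list_0_iff)
    then show ?thesis using False by simp
  qed
  finally show ?case using Cons by simp
qed

lemma walk_len_nonneg: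
  assumes "finite_metric V d" "set p \<subseteq> V"
  shows "0 \<le> walk_len d p"
  unfolding walk_len_pairs
proof (rule sum_list_nonneg)
  fix z assume "z \<in> set (map (\<lambda>(a, b). d a b) (pairs p))"
  then obtain a b where "(a, b) \<in> set (pairs p)" "z = d a b" by auto
  then show "0 \<le> z" using set_pairs[of a b p] assms metric_facts(1)[of V d a b] by auto
qed

lemma walk_hd_last:
  assumes met: "finite_metric V d"
  shows "set p \<subseteq> V \<Longrightarrow> p \<noteq> [] \<Longrightarrow> d (hd p) (last p) \<le> walk_len d p"
proof (induction p rule: pairs.induct)
  case (1 x y zs)
  have w: "walk_len d (x # y # zs) = d x y + walk_len d (y # zs)"
    unfolding walk_len_pairs by simp
  have "d x (last (y # zs)) \<le> d x y + d y (last (y # zs))"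
    using metric_tri[OF met, of x y "last (y # zs)"] 1(2) by (metis last_in_set list.distinct(1) set_subset_Cons subsetD insert_subset list.simps(15))
  then show ?case using 1 w by simp
next
  case ("2_2" v)
  then show ?case using metric_facts(3)[OF met, of v] by (simp add: walk_len_def)
qed simp

lemma walk_via:
  assumes met: "finite_metric V d"
  shows "set p \<subseteq> V \<Longrightarrow> u \<in> set p \<Longrightarrow> d (hd p) u + d u (last p) \<le> walk_len d p"
proof (induction p rule: pairs.induct)
  case (1 x y zs)
  have w: "walk_len d (x # y # zs) = d x y + walk_len d (y # zs)"
    unfolding walk_len_pairs by simp
  have V: "x \<in> V" "y \<in> V" "u \<in> V" "last (y # zs) \<in> V" using 1(2,3) by auto
  show ?case
  proof (cases "u = x")
    case True
    then show ?thesis using walk_hd_last[OF met, of "x # y # zs"] 1(2) metric_facts(3)[OF met V(1) V(1)] by simp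
  next
    case False
    then have "u \<in> set (y # zs)" using 1(3) by simp
    then have "d y u + d u (last (y # zs)) \<le> walk_len d (y # zs)" using 1 by simp
    moreover have "d x u \<le> d x y + d y u" using metric_tri[OF met V(1,2,3)] .
    ultimately show ?thesis using w by simp
  qed
next
  case ("2_2" v)
  then show ?case using metric_facts(3)[OF met, of v] by (simp add: walk_len_def)
qed simp

lemma cst_zero:
  assumes "\<forall>u\<in>set p. lev d r M u < j"
  shows "cst d r M j p = 0"
proof -
  have "filter (Pj d r M j) (pairs (qf d r M j p)) = []"
  proof (rule filter_False, rule ballI)
    fix e assume "e \<in> set (pairs (qf d r M j p))"
    then have "fst e \<in> set p" "snd e \<in> set p" using set_pairs[of "fst e" "snd e"] set_qf[of d r M j p] by auto
    then show "\<not> Pj d r M j e" using assms unfolding Pj_def by (auto simp: max_def)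
  qed
  then show ?thesis unfolding cst_def by simp
qed

theorem corollary4:
  fixes V :: "'a set" and d :: "'a \<Rightarrow> 'a \<Rightarrow> real" and r :: 'a and ks :: "nat list"
    and M :: real and H :: "nat \<Rightarrow> ('a \<times> 'a) set"
  assumes metric: "finite_metric V d"
    and depot: "r \<in> V"
    and vehicles: "ks \<noteq> []"
    and M_pos: "M > 0"
    and M_opt: "htsp_opt V d r ks \<le> M"
    and LP: "level_prim V d r M H"
  shows "(\<forall>p. simple_path_in (\<Union>i. H i) p \<and> hd p = r \<and> tree_degree (\<Union>i. H i) (last p) = 1 \<longrightarrow>
            (\<forall>j < length p - 1. \<forall>a b. p ! j \<in> level_set V d r M a \<longrightarrow>
                p ! Suc j \<in> level_set V d r M b \<longrightarrow> a \<le> b))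
       \<and> (\<forall>i. (\<Sum>j | i \<le> j \<and> H j \<noteq> {}. edge_weight d (H j))
               \<le> 8 * M * (\<Sum>j | j \<in> set ks \<and> i - 1 \<le> j. 2 ^ j * real (mu ks j)))"
proof (intro conjI allI impI)
  fix p j a b
  assume p: "simple_path_in (\<Union>i. H i) p \<and> hd p = r \<and> tree_degree (\<Union>i. H i) (last p) = 1"
    and j: "j < length p - 1" and a: "p ! j \<in> level_set V d r M a" and b: "p ! Suc j \<in> level_set V d r M b"
  have "lev d r M (p ! j) \<le> lev d r M (p ! Suc j)"
    using part_a[OF metric depot M_pos LP, of p] p j by blast
  then show "a \<le> b" using a b unfolding level_set_eq[OF M_pos] by simp
next
  fix i
  let ?l = "lev d r M"
  let ?n = "length ks"
  define Sols where "Sols = {makespan d r ks ts | ts. htsp_solution V r ks ts}"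
  have finV: "finite V" using metric unfolding finite_metric_def by blast
  obtain xs where xs: "set xs = V" using finite_list[OF finV] by blast
  have sol0: "htsp_solution V r ks (replicate ?n xs)"
    unfolding htsp_solution_def using xs vehicles by auto
  have Sne: "Sols \<noteq> {}" unfolding Sols_def using sol0 by blast
  have mk_ge: "tour_len d r (ts ! v) / 2 ^ (ks ! v) \<le> makespan d r ks ts" if "v < ?n" for ts v
    unfolding makespan_def by (rule Max_ge) (use that in auto)
  have tourV: "set (r # t @ [r]) \<subseteq> V" if "set t \<subseteq> V" for t using that depot by auto
  have Sbdd: "bdd_below Sols"
  proof (rule bdd_belowI)
    fix x assume "x \<in> Sols"
    then obtain ts where ts: "htsp_solution V r ks ts" "x = makespan d r ks ts" unfolding Sols_def by blast
    have l0: "0 < ?n" using vehicles by simp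
    have "set (ts ! 0) \<subseteq> V" using ts(1) l0 unfolding htsp_solution_def by (metis nth_mem)
    then have "0 \<le> tour_len d r (ts ! 0)" unfolding tour_len_def
      using walk_len_nonneg[OF metric tourV] by blast
    then have "0 \<le> tour_len d r (ts ! 0) / 2 ^ (ks ! 0)" by simp
    then show "0 \<le> x" using mk_ge[OF l0, of ts] ts(2) by linarith
  qed
  have "Inf Sols < 2 * M" using M_opt M_pos unfolding htsp_opt_def Sols_def by linarith
  then obtain ts where ts: "htsp_solution V r ks ts" "makespan d r ks ts < 2 * M"
    using cInf_less_iff[OF Sne Sbdd] unfolding Sols_def by blast
  have lts: "length ts = ?n" and tsV: "\<forall>t\<in>set ts. set t \<subseteq> V"
    and cov: "V \<subseteq> insert r (\<Union>t\<in>set ts. set t)" using ts(1) unfolding htsp_solution_def by auto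
  define \<tau> where "\<tau> v = r # ts ! v @ [r]" for v
  define Ts where "Ts = map \<tau> [0..<?n]"
  have tauV: "set (\<tau> v) \<subseteq> V" if "v < ?n" for v
    unfolding \<tau>_def using tourV tsV lts that by (metis nth_mem)
  have tauL: "walk_len d (\<tau> v) \<le> 2 ^ (ks ! v) * (2 * M)" if "v < ?n" for v
  proof -
    have "tour_len d r (ts ! v) / 2 ^ (ks ! v) < 2 * M" using mk_ge[OF that, of ts] ts(2) by linarith
    then have "tour_len d r (ts ! v) < 2 * M * 2 ^ (ks ! v)" by (simp add: divide_less_eq)
    then show ?thesis unfolding \<tau>_def tour_len_def by (simp add: algebra_simps)
  qed
  have tours: "\<forall>t\<in>set Ts. set t \<subseteq> V \<and> t \<noteq> [] \<and> hd t = r"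
    unfolding Ts_def using tauV by (auto simp: \<tau>_def)
  have cover: "V \<subseteq> insert r (\<Union>t\<in>set Ts. set t)"
  proof
    fix u assume "u \<in> V"
    then have "u = r \<or> (\<exists>t\<in>set ts. u \<in> set t)" using cov by blast
    then show "u \<in> insert r (\<Union>t\<in>set Ts. set t)"
    proof
      assume "\<exists>t\<in>set ts. u \<in> set t"
      then obtain v where v: "v < ?n" "u \<in> set (ts ! v)" using lts by (metis in_set_conv_nth)
      have "\<tau> v \<in> set Ts" unfolding Ts_def using v(1) by simp
      moreover have "u \<in> set (\<tau> v)" unfolding \<tau>_def using v(2) by simp
      ultimately show ?thesis by blast
    qed simp
  qed
  have lb: "edge_weight d (H j) \<le> (\<Sum>v<?n. cst d r M j (\<tau> v))" for j
  proof -
    have "edge_weight d (H j) \<le> sum_list (map (cst d r M j) Ts)"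
      by (rule level_bound[OF metric depot M_pos LP tours cover])
    also have "\<dots> = (\<Sum>v<?n. cst d r M j (\<tau> v))"
      unfolding Ts_def by (simp add: interv_sum_list_conv_sum_set_nat atLeast0LessThan)
    finally show ?thesis .
  qed
  define G where "G k = (if i - 1 \<le> k then (2::real) ^ k else 0)" for k
  define J where "J = {j. i \<le> j \<and> H j \<noteq> {}}"
  have RHSeq: "(\<Sum>v<?n. G (ks ! v)) = (\<Sum>j | j \<in> set ks \<and> i - 1 \<le> j. 2 ^ j * real (mu ks j))"
  proof -
    have "(\<Sum>v<?n. G (ks ! v)) = sum_list (map G ks)"
      by (simp add: sum_list_sum_nth atLeast0LessThan)
    also have "\<dots> = (\<Sum>k\<in>set ks. real (count_list ks k) * G k)" by (rule sum_list_count_real)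
    also have "\<dots> = (\<Sum>k\<in>set ks. if i - 1 \<le> k then 2 ^ k * real (mu ks k) else 0)"
      unfolding G_def mu_def by (rule sum.cong) auto
    also have "\<dots> = (\<Sum>j | j \<in> set ks \<and> i - 1 \<le> j. 2 ^ j * real (mu ks j))"
      using sum.inter_filter[of "set ks" "\<lambda>k. 2 ^ k * real (mu ks k)" "\<lambda>k. i - 1 \<le> k"] by simp
    finally show ?thesis .
  qed
  have Gnn: "0 \<le> (\<Sum>v<?n. G (ks ! v))" unfolding G_def by (rule sum_nonneg) auto
  have pv: "(\<Sum>j\<in>J. cst d r M j (\<tau> v)) \<le> 6 * M * G (ks ! v)" if "v < ?n" "finite J" for v
  proof (cases "i - 1 \<le> ks ! v")
    case True
    have "(\<Sum>j\<in>J. cst d r M j (\<tau> v)) \<le> 3 * walk_len d (\<tau> v)"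
      by (rule cst_sum[OF metric depot M_pos tauV[OF that(1)] that(2)])
    also have "\<dots> \<le> 3 * (2 ^ (ks ! v) * (2 * M))" using tauL[OF that(1)] by linarith
    also have "3 * (2 ^ (ks ! v) * (2 * M)) = 6 * M * G (ks ! v)"
      unfolding G_def using True by (simp add: mult_ac)
    finally show ?thesis .
  next
    case False
    have "cst d r M j (\<tau> v) = 0" if "j \<in> J" for j
    proof (rule cst_zero, rule ballI)
      fix u assume u: "u \<in> set (\<tau> v)"
      have "d (hd (\<tau> v)) u + d u (last (\<tau> v)) \<le> walk_len d (\<tau> v)"
        by (rule walk_via[OF metric tauV[OF \<open>v < ?n\<close>] u])
      moreover have "d u r = d r u" using metric_facts(2)[OF metric] u tauV[OF \<open>v < ?n\<close>] depot by blast
      ultimately have "2 * d r u \<le> 2 ^ (ks ! v) * (2 * M)" using tauL[OF \<open>v < ?n\<close>] unfolding \<tau>_def by simp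
      then have "d r u \<le> 2 ^ (ks ! v) * M" by simp
      then have "?l u \<le> ks ! v" using lev_le_iff[OF M_pos, of d r u "ks ! v"] by blast
      moreover have "ks ! v < j" using False that unfolding J_def by auto
      ultimately show "?l u < j" by simp
    qed
    then show ?thesis unfolding G_def using False by simp
  qed
  show "(\<Sum>j | i \<le> j \<and> H j \<noteq> {}. edge_weight d (H j))
               \<le> 8 * M * (\<Sum>j | j \<in> set ks \<and> i - 1 \<le> j. 2 ^ j * real (mu ks j))"
  proof (cases "finite J")
    case False
    then have "(\<Sum>j | i \<le> j \<and> H j \<noteq> {}. edge_weight d (H j)) = 0" unfolding J_def by simp
    then show ?thesis using Gnn RHSeq M_pos by simp
  next
    case True
    have "(\<Sum>j\<in>J. edge_weight d (H j)) \<le> (\<Sum>j\<in>J. \<Sum>v<?n. cst d r M j (\<tau> v))"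
      by (rule sum_mono) (rule lb)
    also have "\<dots> = (\<Sum>v<?n. \<Sum>j\<in>J. cst d r M j (\<tau> v))" by (rule sum.swap)
    also have "\<dots> \<le> (\<Sum>v<?n. 6 * M * G (ks ! v))" by (rule sum_mono) (use pv True in auto)
    also have "\<dots> = 6 * M * (\<Sum>v<?n. G (ks ! v))" by (simp add: sum_distrib_left)
    also have "\<dots> \<le> 8 * M * (\<Sum>v<?n. G (ks ! v))" using Gnn M_pos by (simp add: mult_right_mono)
    finally show ?thesis unfolding J_def RHSeq .
  qed
qed

end
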